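(* Let $\mathrm{EXACT}_2:\{0,1\}^4\to\{0,1\}$ be the function $\mathrm{EXACT}_2(x)=1$ if and only if $|x|=2$. Then $Q_E(\mathrm{EXACT}_2)=2$.
   Context: $|x|$ denotes the Hamming weight of a bit string $x$. Quantum query model: a $t$-query quantum query algorithm on inputs $x\in\{0,1\}^m$ acts on a Hilbert space $\mathcal H_{\rm in}\otimes\mathcal H_{\rm work}\otimes\mathcal H_{\rm out}$, where $\mathcal H_{\rm in}$ has orthonormal basis $|0\rangle,\dots,|m\rangle$, $\mathcal H_{\rm work}$ is a finite-dimensional workspace of arbitrary size, and $\mathcal H_{\rm out}$ is one qubit. It is specified by input-independent unitaries $U_0,\dots,U_t$, and on input $x$ produces the state $U_tO_xU_{t-1}O_x\cdots O_xU_0|0\rangle$ ($t$ applications of $O_x$), where the oracle $O_x$ acts on $\mathcal H_{\rm in}$ by $|i\rangle\mapsto(-1)^{x_i}|i\rangle$ with the convention $x_0=0$ (and as the identity on the other registers). The output is obtained by measuring $\mathcal H_{\rm out}$ in the computational basis. The algorithm computes $h$ exactly if for every $x$ the output equals $h(x)$ with probability $1$. $Q_E(h)$ is the minimum $t$ such that some $t$-query quantum query algorithm computes $h$ exactly. *)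

theory Defs
  imports "Jordan_Normal_Form.Matrix"
begin

(* Hilbert space H_in (x) H_work (x) H_out with H_in of dimension m+1 (basis |0>..|m>),
   H_work of dimension w (w >= 1), H_out one qubit.
   Basis vector |i>|j>|b> (i <= m, j < w, b < 2) is coordinate  i*(2*w) + j*2 + b. *)

definition qdim :: "nat \<Rightarrow> nat \<Rightarrow> nat" where
  "qdim m w = (m + 1) * w * 2"

definition cadjoint :: "complex mat \<Rightarrow> complex mat" where
  "cadjoint U = mat (dim_col U) (dim_row U) (\<lambda>(i, j). cnj (U $$ (j, i)))"

definition unitary_mat :: "nat \<Rightarrow> complex mat \<Rightarrow> bool" where
  "unitary_mat d U \<longleftrightarrow> U \<in> carrier_mat d d \<and> cadjoint U * U = 1\<^sub>m d"

(* input bit x_i for i in {0..m}, input given as a bool list of length m,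
   x_i = xs ! (i - 1) for 1 <= i <= m, and the convention x_0 = 0 *)
definition qbit :: "bool list \<Rightarrow> nat \<Rightarrow> bool" where
  "qbit xs i = (if i = 0 then False else xs ! (i - 1))"

definition query_op :: "nat \<Rightarrow> nat \<Rightarrow> bool list \<Rightarrow> complex mat" where
  "query_op m w xs = mat (qdim m w) (qdim m w)
     (\<lambda>(r, c). if r = c then (if qbit xs (r div (2 * w)) then -1 else 1) else 0)"

fun run :: "nat \<Rightarrow> nat \<Rightarrow> (nat \<Rightarrow> complex mat) \<Rightarrow> bool list \<Rightarrow> nat \<Rightarrow> complex vec" where
  "run m w U xs 0 = U 0 *\<^sub>v unit_vec (qdim m w) 0"
| "run m w U xs (Suc k) = U (Suc k) *\<^sub>v (query_op m w xs *\<^sub>v run m w U xs k)"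

definition out_prob :: "nat \<Rightarrow> nat \<Rightarrow> complex vec \<Rightarrow> bool \<Rightarrow> real" where
  "out_prob m w \<psi> b = (\<Sum>r\<in>{r. r < qdim m w \<and> (r mod 2 = 1) = b}. (cmod (\<psi> $ r))\<^sup>2)"

definition computes_exactly ::
  "nat \<Rightarrow> (bool list \<Rightarrow> bool) \<Rightarrow> nat \<Rightarrow> nat \<Rightarrow> (nat \<Rightarrow> complex mat) \<Rightarrow> bool" where
  "computes_exactly m h t w U \<longleftrightarrow>
     w \<ge> 1 \<and> (\<forall>k\<le>t. unitary_mat (qdim m w) (U k)) \<and>
     (\<forall>xs. length xs = m \<longrightarrow> out_prob m w (run m w U xs t) (h xs) = 1)"

definition Q_E :: "nat \<Rightarrow> (bool list \<Rightarrow> bool) \<Rightarrow> nat" where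
  "Q_E m h = (LEAST t. \<exists>w U. computes_exactly m h t w U)"

definition EXACT2 :: "bool list \<Rightarrow> bool" where
  "EXACT2 xs \<longleftrightarrow> count_list xs True = 2"

end

theory Submission
  imports Defs
begin
definition om :: complex where "om = Complex (-1/2) (sqrt 3 / 2)"

lemma om_sq: "om * om = -1 - om"
  by (simp add: om_def complex_eq_iff)
lemma cnj_om: "cnj om = -1 - om"
  by (simp add: om_def complex_eq_iff)
lemma cmod_om: "cmod om = 1"
  by (simp add: om_def cmod_def power2_eq_square)

definition Mf :: "nat \<Rightarrow> nat \<Rightarrow> complex" where
"Mf j i = (if j = i then 0 else if j = 0 \<or> i = 0 then 1/2
   else if (j=1 \<and> i=2) \<or> (j=2 \<and> i=1) \<or> (j=3 \<and> i=4) \<or> (j=4 \<and> i=3) then 1/2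
   else if (j=1 \<and> i=3) \<or> (j=3 \<and> i=1) \<or> (j=2 \<and> i=4) \<or> (j=4 \<and> i=2) then om/2
   else (-1-om)/2)"

definition Ub :: "complex mat" where
"Ub = mat 10 10 (\<lambda>(r,c). if even r \<and> even c then Mf (r div 2) (c div 2) else if r = c then 1 else 0)"

definition Uc :: "complex mat" where
"Uc = mat 10 10 (\<lambda>(r,c). if r = 1 then (if even c then cnj (Mf (c div 2) 0) else 0)
   else if r = 0 then (if c = 1 then 1 else 0)
   else if even r \<and> even c then cnj (Mf (c div 2) (r div 2))
   else if r = c then 1 else 0)"

lemma unitary10I:
  assumes "U \<in> carrier_mat 10 10"
    "\<And>i j. i < 10 \<Longrightarrow> j < 10 \<Longrightarrow> (\<Sum>k<10. cnj (U $$ (k,i)) * U $$ (k,j)) = (if i = j then 1 else 0)"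
  shows "unitary_mat 10 U"
  unfolding unitary_mat_def
proof (intro conjI)
  show "U \<in> carrier_mat 10 10" by fact
  show "cadjoint U * U = 1\<^sub>m 10"
  proof (rule eq_matI)
    fix i j assume "i < dim_row (1\<^sub>m 10 :: complex mat)" "j < dim_col (1\<^sub>m 10 :: complex mat)"
    then have ij: "i < 10" "j < 10" by auto
    have "(cadjoint U * U) $$ (i,j) = (\<Sum>k<10. cnj (U $$ (k,i)) * U $$ (k,j))"
      using assms(1) ij by (simp add: cadjoint_def index_mult_mat scalar_prod_def atLeast0LessThan)
    then show "(cadjoint U * U) $$ (i,j) = 1\<^sub>m 10 $$ (i,j)" using assms(2)[OF ij] ij by simp
  qed (use assms(1) in \<open>auto simp: cadjoint_def\<close>)
qed

lemma less10: "(i::nat) < 10 \<Longrightarrow> i=0 \<or> i=1 \<or> i=2 \<or> i=3 \<or> i=4 \<or> i=5 \<or> i=6 \<or> i=7 \<or> i=8 \<or> i=9"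
  by arith

lemma sum10: "(\<Sum>k<(10::nat). f k) = f 0 + f 1 + f 2 + f 3 + f 4 + f 5 + f 6 + f 7 + f 8 + (f 9 :: complex)"
  by (simp add: eval_nat_numeral)

lemma Ub_unitary: "unitary_mat 10 Ub"
proof (rule unitary10I)
  show "Ub \<in> carrier_mat 10 10" by (simp add: Ub_def)
  fix i j :: nat assume "i < 10" "j < 10"
  then show "(\<Sum>k<10. cnj (Ub $$ (k,i)) * Ub $$ (k,j)) = (if i = j then 1 else 0)"
    apply (simp only: sum10)
    apply (elim less10[elim_format] disjE)
    apply (simp_all add: Ub_def Mf_def cnj_om algebra_simps om_sq)
    apply (simp_all add: field_simps)
    done
qed
definition nrm :: "complex vec \<Rightarrow> real" where
  "nrm v = (\<Sum>r<dim_vec v. (cmod (v $ r))\<^sup>2)"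

lemma sum_cmod_sq: "complex_of_real (\<Sum>r\<in>A. (cmod (f r))\<^sup>2) = (\<Sum>r\<in>A. cnj (f r) * f r)"
proof -
  have "\<And>r. complex_of_real ((cmod (f r))\<^sup>2) = cnj (f r) * f r"
    by (subst complex_norm_square) (simp add: mult.commute)
  then show ?thesis by (simp only: of_real_sum)
qed

lemma unitary_nrm:
  assumes U: "unitary_mat d U" and v: "v \<in> carrier_vec d"
  shows "nrm (U *\<^sub>v v) = nrm v"
proof -
  have Uc: "U \<in> carrier_mat d d" and UU: "cadjoint U * U = 1\<^sub>m d"
    using U by (auto simp: unitary_mat_def)
  let ?w = "U *\<^sub>v v"
  have dw: "dim_vec ?w = d" using Uc by simp
  have dv: "dim_vec v = d" using v by simp
  have wr: "\<And>r. r < d \<Longrightarrow> ?w $ r = (\<Sum>a<d. U $$ (r,a) * v $ a)"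
    using Uc v by (simp add: scalar_prod_def atLeast0LessThan)
  have "(\<Sum>r<d. cnj (?w $ r) * ?w $ r) = (\<Sum>r<d. \<Sum>b<d. \<Sum>a<d. cnj (U $$ (r,a)) * cnj (v $ a) * (U $$ (r,b) * v $ b))"
    by (simp add: wr sum_distrib_left sum_distrib_right)
  also have "\<dots> = (\<Sum>b<d. \<Sum>r<d. \<Sum>a<d. cnj (U $$ (r,a)) * cnj (v $ a) * (U $$ (r,b) * v $ b))"
    by (rule sum.swap)
  also have "\<dots> = (\<Sum>b<d. \<Sum>a<d. \<Sum>r<d. cnj (U $$ (r,a)) * cnj (v $ a) * (U $$ (r,b) * v $ b))"
    by (rule sum.cong[OF refl], rule sum.swap)
  also have "\<dots> = (\<Sum>b<d. \<Sum>a<d. cnj (v $ a) * v $ b * (\<Sum>r<d. cnj (U $$ (r,a)) * U $$ (r,b)))"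
    by (intro sum.cong refl) (simp add: sum_distrib_left mult_ac)
  also have "\<dots> = (\<Sum>a<d. \<Sum>b<d. cnj (v $ a) * v $ b * (\<Sum>r<d. cnj (U $$ (r,a)) * U $$ (r,b)))"
    by (rule sum.swap)
  also have "\<dots> = (\<Sum>a<d. \<Sum>b<d. cnj (v $ a) * v $ b * (if a = b then 1 else 0))"
  proof -
    have "\<And>a b. a < d \<Longrightarrow> b < d \<Longrightarrow> (\<Sum>r<d. cnj (U $$ (r,a)) * U $$ (r,b)) = (if a = b then 1 else 0)"
    proof -
      fix a b assume ab: "a < d" "b < d"
      have "(cadjoint U * U) $$ (a,b) = (\<Sum>r<d. cnj (U $$ (r,a)) * U $$ (r,b))"
        using Uc ab by (simp add: cadjoint_def index_mult_mat scalar_prod_def atLeast0LessThan)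
      then show "(\<Sum>r<d. cnj (U $$ (r,a)) * U $$ (r,b)) = (if a = b then 1 else 0)"
        using UU ab by simp
    qed
    then show ?thesis by (intro sum.cong refl) simp
  qed
  also have "\<dots> = (\<Sum>a<d. cnj (v $ a) * v $ a)"
    by (simp add: if_distrib cong: if_cong)
  finally have "(\<Sum>r<d. cnj (?w $ r) * ?w $ r) = (\<Sum>a<d. cnj (v $ a) * v $ a)" .
  then have "complex_of_real (nrm ?w) = complex_of_real (nrm v)"
    unfolding nrm_def dw dv sum_cmod_sq by simp
  then show ?thesis by simp
qed

definition sg :: "bool \<Rightarrow> complex" where "sg b = (if b then -1 else 1)"

lemma query_carrier: "query_op m w xs \<in> carrier_mat (qdim m w) (qdim m w)"
  by (simp add: query_op_def)

lemma query_idx: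
  assumes "v \<in> carrier_vec (qdim m w)" "r < qdim m w"
  shows "(query_op m w xs *\<^sub>v v) $ r = sg (qbit xs (r div (2*w))) * v $ r"
proof -
  have e: "\<And>c. c < qdim m w \<Longrightarrow> query_op m w xs $$ (r,c) = (if r = c then sg (qbit xs (r div (2*w))) else 0)"
    using assms(2) by (simp add: query_op_def sg_def)
  have "(query_op m w xs *\<^sub>v v) $ r = (\<Sum>c\<in>{0..<qdim m w}. query_op m w xs $$ (r,c) * v $ c)"
    using assms by (simp add: query_op_def scalar_prod_def)
  also have "\<dots> = (\<Sum>c\<in>{0..<qdim m w}. (if r = c then sg (qbit xs (r div (2*w))) else 0) * v $ c)"
    by (rule sum.cong) (auto simp: e)
  also have "\<dots> = (\<Sum>c\<in>{0..<qdim m w}. (if r = c then sg (qbit xs (r div (2*w))) * v $ c else 0))"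
    by (rule sum.cong) auto
  also have "\<dots> = sg (qbit xs (r div (2*w))) * v $ r" using assms(2) by simp
  finally show ?thesis .
qed

lemma cmod_sg: "cmod (sg b) = 1" by (simp add: sg_def)

lemma query_nrm:
  assumes "v \<in> carrier_vec (qdim m w)"
  shows "nrm (query_op m w xs *\<^sub>v v) = nrm v"
proof -
  have d: "dim_vec (query_op m w xs *\<^sub>v v) = qdim m w" "dim_vec v = qdim m w"
    using assms by (auto simp: query_op_def)
  show ?thesis unfolding nrm_def d
    by (rule sum.cong) (auto simp: query_idx[OF assms] norm_mult cmod_sg)
qed

lemma run_carrier:
  assumes "\<forall>k\<le>t. unitary_mat (qdim m w) (U k)" "k \<le> t"
  shows "run m w U xs k \<in> carrier_vec (qdim m w)"
  using assms(2)
proof (induction k)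
  case 0
  then show ?case using assms(1) by (auto simp: unitary_mat_def)
next
  case (Suc k)
  then have "run m w U xs k \<in> carrier_vec (qdim m w)" by simp
  moreover have "U (Suc k) \<in> carrier_mat (qdim m w) (qdim m w)" using assms(1) Suc.prems by (auto simp: unitary_mat_def)
  ultimately show ?case
    by (simp only: run.simps) (meson mult_mat_vec_carrier query_carrier)
qed

lemma nrm_unit: "n > 0 \<Longrightarrow> nrm (unit_vec n 0) = 1"
proof -
  assume n: "n > 0"
  have "nrm (unit_vec n 0) = (\<Sum>r<n. if r = 0 then 1 else 0)"
    unfolding nrm_def by (rule sum.cong) (auto simp: unit_vec_def)
  also have "\<dots> = 1" using n by simp
  finally show ?thesis .
qed

lemma run_nrm:
  assumes "w \<ge> 1" "\<forall>k\<le>t. unitary_mat (qdim m w) (U k)" "k \<le> t"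
  shows "nrm (run m w U xs k) = 1"
  using assms(3)
proof (induction k)
  case 0
  have "qdim m w > 0" using assms(1) by (simp add: qdim_def)
  moreover have "unitary_mat (qdim m w) (U 0)" using assms(2) by auto
  ultimately show ?case by (simp add: unitary_nrm nrm_unit)
next
  case (Suc k)
  then have IH: "nrm (run m w U xs k) = 1" and c: "run m w U xs k \<in> carrier_vec (qdim m w)"
    using run_carrier[OF assms(2)] by auto
  have c2: "query_op m w xs *\<^sub>v run m w U xs k \<in> carrier_vec (qdim m w)" using c by (meson mult_mat_vec_carrier query_carrier)
  have "unitary_mat (qdim m w) (U (Suc k))" using assms(2) Suc.prems by auto
  then show ?case using IH c c2 by (simp add: unitary_nrm query_nrm)
qed

lemma out_prob_sum:
  assumes "v \<in> carrier_vec (qdim m w)"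
  shows "out_prob m w v True + out_prob m w v False = nrm v"
proof -
  have "{r. r < qdim m w \<and> (r mod 2 = 1) = True} \<union> {r. r < qdim m w \<and> (r mod 2 = 1) = False} = {..<qdim m w}"
    by auto
  moreover have "{r. r < qdim m w \<and> (r mod 2 = 1) = True} \<inter> {r. r < qdim m w \<and> (r mod 2 = 1) = False} = {}"
    by auto
  ultimately show ?thesis using assms unfolding out_prob_def nrm_def
    by (simp add: sum.union_disjoint[symmetric])
qed

lemma Uc_unitary: "unitary_mat 10 Uc"
proof (rule unitary10I)
  show "Uc \<in> carrier_mat 10 10" by (simp add: Uc_def)
  fix i j :: nat assume "i < 10" "j < 10"
  then show "(\<Sum>k<10. cnj (Uc $$ (k,i)) * Uc $$ (k,j)) = (if i = j then 1 else 0)"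
    apply (simp only: sum10)
    apply (elim less10[elim_format] disjE)
    apply (simp_all add: Uc_def Mf_def cnj_om algebra_simps om_sq)
    apply (simp_all add: field_simps)
    done
qed

lemma sum5: "(\<Sum>k<(5::nat). f k) = f 0 + f 1 + f 2 + f 3 + (f 4 :: complex)"
  by (simp add: eval_nat_numeral)

lemma Ub_mult: "Ub *\<^sub>v vec 10 f = vec 10 (\<lambda>r. if even r then (\<Sum>i<5. Mf (r div 2) i * f (2*i)) else f r)"
proof (rule eq_vecI)
  show "dim_vec (Ub *\<^sub>v vec 10 f) = dim_vec (vec 10 (\<lambda>r. if even r then (\<Sum>i<5. Mf (r div 2) i * f (2*i)) else f r))"
    by (simp add: Ub_def)
  fix r assume "r < dim_vec (vec 10 (\<lambda>r. if even r then (\<Sum>i<5. Mf (r div 2) i * f (2*i)) else f r))"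
  then have r: "r < 10" by simp
  have "(Ub *\<^sub>v vec 10 f) $ r = (\<Sum>c<10. Ub $$ (r,c) * f c)"
    using r by (simp add: Ub_def scalar_prod_def atLeast0LessThan)
  then show "(Ub *\<^sub>v vec 10 f) $ r = vec 10 (\<lambda>r. if even r then (\<Sum>i<5. Mf (r div 2) i * f (2*i)) else f r) $ r"
    using r
    apply (simp only: sum10 sum5 index_vec)
    apply (elim less10[elim_format] disjE)
    apply (simp_all add: Ub_def)
    done
qed

lemma Uc_mult1: "(Uc *\<^sub>v vec 10 f) $ 1 = (\<Sum>i<5. cnj (Mf i 0) * f (2*i))"
proof -
  have "(Uc *\<^sub>v vec 10 f) $ 1 = (\<Sum>c<10. Uc $$ (1,c) * f c)"
    by (simp add: Uc_def scalar_prod_def atLeast0LessThan)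
  then show ?thesis
    by (simp add: sum10 sum5 Uc_def)
qed

lemma Uc_mult_odd: "r < 10 \<Longrightarrow> odd r \<Longrightarrow> r \<noteq> 1 \<Longrightarrow> (Uc *\<^sub>v vec 10 f) $ r = f r"
proof -
  assume r: "r < 10" "odd r" "r \<noteq> 1"
  have "(Uc *\<^sub>v vec 10 f) $ r = (\<Sum>c<10. Uc $$ (r,c) * f c)"
    using r by (simp add: Uc_def scalar_prod_def atLeast0LessThan)
  then show ?thesis using r
    apply (simp only: sum10)
    apply (elim less10[elim_format] disjE)
    apply (simp_all add: Uc_def)
    done
qed

lemma qd10: "qdim 4 1 = 10" unfolding qdim_def by simp

lemma Q_mult: "query_op 4 1 xs *\<^sub>v vec 10 f = vec 10 (\<lambda>r. sg (qbit xs (r div 2)) * f r)"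
proof (rule eq_vecI)
  show "dim_vec (query_op 4 1 xs *\<^sub>v vec 10 f) = dim_vec (vec 10 (\<lambda>r. sg (qbit xs (r div 2)) * f r))"
    by (simp add: query_op_def qdim_def)
  fix r assume "r < dim_vec (vec 10 (\<lambda>r. sg (qbit xs (r div 2)) * f r))"
  then have r: "r < qdim 4 1" by (simp add: qdim_def)
  have c: "vec 10 f \<in> carrier_vec (qdim 4 1)" by (simp add: qdim_def)
  show "(query_op 4 1 xs *\<^sub>v vec 10 f) $ r = vec 10 (\<lambda>r. sg (qbit xs (r div 2)) * f r) $ r"
    using query_idx[OF c r, of xs] r by (simp add: qdim_def)
qed

lemma unit10: "unit_vec (qdim 4 1) 0 = vec 10 (\<lambda>r. if r = 0 then 1 else 0)"
  by (simp add: qdim_def unit_vec_def)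

definition Ualg :: "nat \<Rightarrow> complex mat" where
  "Ualg k = (if k = 2 then Uc else Ub)"

lemma cmod_om2: "cmod (-1 - om) = 1"
  by (metis cnj_om cmod_om complex_mod_cnj)

lemma fin1: "(cmod (run 4 1 Ualg [a,b,c,d] 2 $ 1))\<^sup>2 = (if EXACT2 [a,b,c,d] then 1 else 0)"
proof -
  have "run 4 1 Ualg [a,b,c,d] 2 $ 1 = (Uc *\<^sub>v (query_op 4 1 [a,b,c,d] *\<^sub>v (Ub *\<^sub>v (query_op 4 1 [a,b,c,d] *\<^sub>v (Ub *\<^sub>v unit_vec (qdim 4 1) 0))))) $ 1"
    by (simp add: Ualg_def numeral_2_eq_2)
  also have "\<dots> = (\<Sum>i<5. cnj (Mf i 0) * (sg (qbit [a,b,c,d] i) * (\<Sum>k<5. Mf i k * (sg (qbit [a,b,c,d] k) * (\<Sum>j<5. Mf k j * (if j = 0 then 1 else 0))))))"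
    by (simp only: unit10 Ub_mult Q_mult Uc_mult1) simp
  finally have e: "run 4 1 Ualg [a,b,c,d] 2 $ 1 = \<dots>" .
  show ?thesis unfolding e
    apply (cases a; cases b; cases c; cases d)
    apply (simp_all add: sum5 Mf_def qbit_def sg_def EXACT2_def)
    apply (simp_all add: cmod_power2 om_def complex_eq_iff)
    apply (simp_all add: power2_eq_square algebra_simps)
    done
qed

lemma run2_eq: "run 4 1 Ualg xs 2 = Uc *\<^sub>v (query_op 4 1 xs *\<^sub>v (Ub *\<^sub>v (query_op 4 1 xs *\<^sub>v (Ub *\<^sub>v unit_vec (qdim 4 1) 0))))"
  by (simp add: Ualg_def numeral_2_eq_2)

lemma fin_odd: "r \<in> {3,5,7,9} \<Longrightarrow> run 4 1 Ualg xs 2 $ r = 0"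
  unfolding run2_eq unit10 Ub_mult Q_mult
  by (auto simp: Uc_mult_odd)

lemma odd_set: "{r. r < qdim 4 1 \<and> (r mod 2 = 1) = True} = {1,3,5,7,9}"
proof -
  have "\<And>r::nat. (r < 10 \<and> r mod 2 = 1) = (r \<in> {1,3,5,7,9})"
  proof
    fix r :: nat assume "r < 10 \<and> r mod 2 = 1" then show "r \<in> {1,3,5,7,9}"
      by (elim conjE less10[elim_format] disjE) auto
  qed auto
  then show ?thesis by (auto simp: qdim_def)
qed

lemma out_true: "out_prob 4 1 (run 4 1 Ualg [a,b,c,d] 2) True = (if EXACT2 [a,b,c,d] then 1 else 0)"
proof -
  have "out_prob 4 1 (run 4 1 Ualg [a,b,c,d] 2) True = (\<Sum>r\<in>{1,3,5,7,9}. (cmod (run 4 1 Ualg [a,b,c,d] 2 $ r))\<^sup>2)"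
    unfolding out_prob_def odd_set ..
  also have "\<dots> = (cmod (run 4 1 Ualg [a,b,c,d] 2 $ 1))\<^sup>2"
    using fin_odd[of 3 "[a,b,c,d]"] fin_odd[of 5 "[a,b,c,d]"] fin_odd[of 7 "[a,b,c,d]"] fin_odd[of 9 "[a,b,c,d]"]
    by simp
  finally show ?thesis using fin1 by simp
qed

lemma Ualg_unitary: "\<forall>k\<le>2. unitary_mat (qdim 4 1) (Ualg k)"
  by (simp add: qdim_def Ualg_def Ub_unitary Uc_unitary)

lemma mult_idx: "A \<in> carrier_mat n n \<Longrightarrow> u \<in> carrier_vec n \<Longrightarrow> r < n \<Longrightarrow> (A *\<^sub>v u) $ r = (\<Sum>c<n. A $$ (r,c) * u $ c)"
  by (simp add: scalar_prod_def atLeast0LessThan)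

lemma upper_out: "length xs = 4 \<Longrightarrow> out_prob 4 1 (run 4 1 Ualg xs 2) (EXACT2 xs) = 1"
proof -
  fix xs :: "bool list" assume "length xs = 4"
  then obtain a b c d where xs: "xs = [a,b,c,d]"
    by (auto simp: length_Suc_conv numeral_eq_Suc)
  have s: "out_prob 4 1 (run 4 1 Ualg xs 2) True + out_prob 4 1 (run 4 1 Ualg xs 2) False = 1"
    using out_prob_sum[OF run_carrier[OF Ualg_unitary, of 2]] run_nrm[OF _ Ualg_unitary, of 2] by simp
  show "out_prob 4 1 (run 4 1 Ualg xs 2) (EXACT2 xs) = 1"
  proof (cases "EXACT2 xs")
    case True
    then show ?thesis using out_true[of a b c d] xs by simp
  next
    case False
    then show ?thesis using out_true[of a b c d] xs s by simp
  qed
qed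

lemma upper: "computes_exactly 4 EXACT2 2 1 Ualg"
  unfolding computes_exactly_def using Ualg_unitary upper_out by auto

lemma op0:
  assumes "out_prob m w v True = 0" "r < qdim m w" "r mod 2 = 1"
  shows "v $ r = 0"
proof -
  have "finite {r. r < qdim m w \<and> (r mod 2 = 1) = True}" by simp
  then have "\<forall>r\<in>{r. r < qdim m w \<and> (r mod 2 = 1) = True}. (cmod (v $ r))\<^sup>2 = 0"
    using assms(1) unfolding out_prob_def by (subst (asm) sum_nonneg_eq_0_iff) auto
  then show ?thesis using assms(2,3) by auto
qed

lemma no0: "\<not> computes_exactly 4 EXACT2 0 w U"
proof
  assume c: "computes_exactly 4 EXACT2 0 w U"
  then have w: "w \<ge> 1" and u: "\<forall>k\<le>0. unitary_mat (qdim 4 w) (U k)"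
    and e: "\<And>xs. length xs = 4 \<Longrightarrow> out_prob 4 w (run 4 w U xs 0) (EXACT2 xs) = 1"
    unfolding computes_exactly_def by auto
  have r: "\<And>xs. run 4 w U xs 0 = run 4 w U [] 0" by simp
  have 1: "out_prob 4 w (run 4 w U [] 0) True = 1"
    using e[of "[True,True,False,False]"] r[of "[True,True,False,False]"] by (simp add: EXACT2_def)
  have 2: "out_prob 4 w (run 4 w U [] 0) False = 1"
    using e[of "[False,False,False,False]"] r[of "[False,False,False,False]"] by (simp add: EXACT2_def)
  have "out_prob 4 w (run 4 w U [] 0) True + out_prob 4 w (run 4 w U [] 0) False = 1"
    using out_prob_sum[OF run_carrier[OF u, of 0]] run_nrm[OF w u, of 0] by simp
  then show False using 1 2 by simp
qed

lemma sg_lin: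
  assumes "i \<le> 4"
  shows "sg (qbit [True,True,False,False] i) = sg (qbit [False,True,False,False] i) - sg (qbit [False,False,False,False] i) + sg (qbit [True,False,False,False] i)"
proof -
  have "i = 0 \<or> i = 1 \<or> i = 2 \<or> i = 3 \<or> i = 4" using assms by arith
  then show ?thesis by (elim disjE) (simp_all add: qbit_def sg_def)
qed

lemma no1: "\<not> computes_exactly 4 EXACT2 1 w U"
proof
  assume c: "computes_exactly 4 EXACT2 1 w U"
  then have w: "w \<ge> 1" and u: "\<forall>k\<le>1. unitary_mat (qdim 4 w) (U k)"
    and e: "\<And>xs. length xs = 4 \<Longrightarrow> out_prob 4 w (run 4 w U xs 1) (EXACT2 xs) = 1"
    unfolding computes_exactly_def by auto
  define d where "d = qdim 4 w"
  define v where "v = U 0 *\<^sub>v unit_vec d 0"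
  have v: "v \<in> carrier_vec d" using run_carrier[OF u, of 0] by (simp add: v_def d_def)
  have U1: "U 1 \<in> carrier_mat d d" using u by (auto simp: unitary_mat_def d_def)
  have runeq: "\<And>xs. run 4 w U xs 1 = U 1 *\<^sub>v (query_op 4 w xs *\<^sub>v v)"
    by (simp add: v_def d_def)
  let ?x11 = "[True,True,False,False]" and ?x01 = "[False,True,False,False]"
    and ?x00 = "[False,False,False,False]" and ?x10 = "[True,False,False,False]"
  have zero: "run 4 w U xs 1 $ r = 0" if "xs \<in> {?x01, ?x00, ?x10}" "r < d" "r mod 2 = 1" for xs r
  proof -
    have l: "length xs = 4" and ne: "\<not> EXACT2 xs" using that(1) by (auto simp: EXACT2_def)
    have "out_prob 4 w (run 4 w U xs 1) False = 1" using e[OF l] ne by simp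
    moreover have "out_prob 4 w (run 4 w U xs 1) True + out_prob 4 w (run 4 w U xs 1) False = 1"
      using out_prob_sum[OF run_carrier[OF u, of 1]] run_nrm[OF w u, of 1] by simp
    ultimately have "out_prob 4 w (run 4 w U xs 1) True = 0" by simp
    then show ?thesis using op0 that(2,3) by (simp add: d_def)
  qed
  have lin: "run 4 w U ?x11 1 $ r = run 4 w U ?x01 1 $ r - run 4 w U ?x00 1 $ r + run 4 w U ?x10 1 $ r"
    if r: "r < d" for r
  proof -
    have qv: "\<And>xs c. c < d \<Longrightarrow> (query_op 4 w xs *\<^sub>v v) $ c = sg (qbit xs (c div (2*w))) * v $ c"
      using query_idx v by (simp add: d_def)
    have dv: "\<And>c. c < d \<Longrightarrow> c div (2*w) \<le> 4"
    proof -
      fix c assume "c < d"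
      then have "c < (2*w) * 5" by (simp add: d_def qdim_def algebra_simps)
      then have "c div (2*w) < 5" using w by (simp add: less_mult_imp_div_less)
      then show "c div (2*w) \<le> 4" by simp
    qed
    have gen: "\<And>xs. run 4 w U xs 1 $ r = (\<Sum>c<d. U 1 $$ (r,c) * (sg (qbit xs (c div (2*w))) * v $ c))"
    proof -
      fix xs
      have qc: "query_op 4 w xs *\<^sub>v v \<in> carrier_vec d" using v unfolding d_def by (meson mult_mat_vec_carrier query_carrier)
      have "(U 1 *\<^sub>v (query_op 4 w xs *\<^sub>v v)) $ r = (\<Sum>c<d. U 1 $$ (r,c) * (query_op 4 w xs *\<^sub>v v) $ c)"
        by (rule mult_idx[OF U1 qc r])
      also have "\<dots> = (\<Sum>c<d. U 1 $$ (r,c) * (sg (qbit xs (c div (2*w))) * v $ c))"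
        by (rule sum.cong) (simp_all add: qv)
      finally show "run 4 w U xs 1 $ r = (\<Sum>c<d. U 1 $$ (r,c) * (sg (qbit xs (c div (2*w))) * v $ c))"
        unfolding runeq .
    qed
    show ?thesis unfolding gen sum_subtractf[symmetric] sum.distrib[symmetric]
    proof (rule sum.cong[OF refl])
      fix c assume "c \<in> {..<d}"
      then have "c < d" by simp
      note e = sg_lin[OF dv[OF this]]
      show "U 1 $$ (r, c) * (sg (qbit ?x11 (c div (2 * w))) * v $ c) =
         U 1 $$ (r, c) * (sg (qbit ?x01 (c div (2 * w))) * v $ c) -
         U 1 $$ (r, c) * (sg (qbit ?x00 (c div (2 * w))) * v $ c) +
         U 1 $$ (r, c) * (sg (qbit ?x10 (c div (2 * w))) * v $ c)"
        by (subst e) (simp add: algebra_simps)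
    qed
  qed
  have "out_prob 4 w (run 4 w U ?x11 1) True = 0"
    unfolding out_prob_def
  proof (rule sum.neutral, intro ballI)
    fix r assume "r \<in> {r. r < qdim 4 w \<and> (r mod 2 = 1) = True}"
    then have r: "r < d" "r mod 2 = 1" by (auto simp: d_def)
    show "(cmod (run 4 w U ?x11 1 $ r))\<^sup>2 = 0" using lin[OF r(1)] zero r by simp
  qed
  moreover have "out_prob 4 w (run 4 w U ?x11 1) True = 1" using e[of ?x11] by (simp add: EXACT2_def)
  ultimately show False by simp
qed

theorem mainTheorem4:
  shows "Q_E 4 EXACT2 = 2"
  unfolding Q_E_def
proof (rule Least_equality)
  show "\<exists>w U. computes_exactly 4 EXACT2 2 w U" using upper by blast
  fix t assume "\<exists>w U. computes_exactly 4 EXACT2 t w U"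
  then obtain w U where c: "computes_exactly 4 EXACT2 t w U" by blast
  show "2 \<le> t"
  proof (rule ccontr)
    assume "\<not> 2 \<le> t"
    then have "t = 0 \<or> t = 1" by arith
    then show False using c no0 no1 by auto
  qed
qed

end
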